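(* Let $0<k_1<\dots<k_s<n$ and $\ell=(\ell_1,\dots,\ell_s)\in\mathbb{Z}^s$. For every $i\in\{1,\dots,s\}$ and $j\in\{1,\dots,k_i\}$, writing $D^i_c=\tau^{q^i_c\partial_{q^i_c}}$ and $D^{s+1}_c:=\Lambda_c$ (a constant), $$\prod_{c\ne j}\Bigl(1-\tau\lambda\frac{D^i_c}{D^i_j}\Bigr)\prod_{c=1}^{k_{i+1}}\Bigl(1-\frac{D^i_j}{D^{i+1}_c}\Bigr)\widehat{\mathbf I}^\ell_{Ab} =q^i_j\,(D^i_j)^{\ell_i}\prod_{c=1}^{k_{i-1}}\Bigl(1-\frac{D^{i-1}_c}{D^i_j}\Bigr)\prod_{c\ne j}\Bigl(1-\tau\lambda\frac{D^i_j}{D^i_c}\Bigr)\widehat{\mathbf I}^\ell_{Ab},$$ where $k_0=0$ (empty product) and $k_{s+1}=n$.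
   Context: Partial flag manifold $Fl=Fl(k_1,\dots,k_s;n)$, $T=(\mathbb{C}^* )^n$, $K_T(\mathrm{pt})=\mathbb{Z}[\Lambda_1^{\pm1},\dots,\Lambda_n^{\pm1}]$. Its abelianization $Ab(Fl)$ is a tower of products of projective bundles whose $K$-ring is $K_T(\mathrm{pt})[(P^i_a)^{\pm1}:1\le i\le s,1\le a\le k_i]$ modulo the relations $\prod_{b=1}^{k_{i+1}}(1-P^i_a/P^{i+1}_b)=0$ for all $i,a$, with the convention $P^{s+1}_b=\Lambda_b$ and $k_{s+1}=n$; the $P^i_a$ are the line bundles whose classical abelian/non-abelian image gives the $K$-theoretic Chern roots of the tautological subbundle $\mathcal S_i$. Formal variables: $q^i_a$, $\tau$, $\lambda$; $\tau^{q^i_a\partial_{q^i_a}}$ sends $q^i_a\mapsto\tau q^i_a$. For $m\in\mathbb{Z}$, $\widehat{\prod}_{l=1}^m f(l)=\prod_{l=1}^mf(l)$ if $m\ge0$ and $1/\prod_{l=m+1}^0f(l)$ if $m<0$. Define, summing over $d=(d^i_a)$ with all $d^i_a\in\mathbb{Z}_{\ge0}$, $$\widehat I^\ell_{Ab}=(1-\tau)\sum_{d}\prod_{i,a}(q^i_a)^{d^i_a}(P^i_a)^{\ell_id^i_a}\tau^{\ell_i\binom{d^i_a}{2}}\cdot\frac{\prod_{i=1}^s\prod_{a\ne b\le k_i}\widehat\prod_{l=1}^{d^i_a-d^i_b}\bigl(1-\lambda\frac{P^i_a}{P^i_b}\tau^l\bigr)}{\prod_{i=1}^{s-1}\prod_{a\le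 k_i,b\le k_{i+1}}\widehat\prod_{l=1}^{d^i_a-d^{i+1}_b}\bigl(1-\frac{P^i_a}{P^{i+1}_b}\tau^l\bigr)\cdot\prod_{a\le k_s,b\le n}\prod_{l=1}^{d^s_a}\bigl(1-\frac{P^s_a}{\Lambda_b}\tau^l\bigr)},$$ and $\widehat{\mathbf I}^\ell_{Ab}=\prod_{i,a}(P^i_a)^{\log(q^i_a)/\log\tau}\widehat I^\ell_{Ab}$, where the prefactor satisfies $\tau^{q^i_a\partial_{q^i_a}}(\prod P^{\log q/\log\tau}f)=\prod P^{\log q/\log\tau}\,P^i_a\tau^{q^i_a\partial_{q^i_a}}f$. *)

theory Defs
  imports Main
begin

text \<open>Coefficient ring: an arbitrary commutative ring in which the generators of
  K_T(Ab(Fl)) (tensored with the formal variables tau, lambda) live and satisfy the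
  defining relations; the needed denominators are assumed to be units.\<close>

definition rinv :: "'a::comm_ring_1 \<Rightarrow> 'a" where
  "rinv x = (THE y. x * y = 1)"

definition zpow :: "'a::comm_ring_1 \<Rightarrow> int \<Rightarrow> 'a" where
  "zpow x m = (if 0 \<le> m then x ^ nat m else rinv x ^ nat (- m))"

definition hprod :: "(int \<Rightarrow> 'a::comm_ring_1) \<Rightarrow> int \<Rightarrow> 'a" where
  "hprod f m = (if 0 \<le> m then (\<Prod>l\<in>{1..m}. f l) else rinv (\<Prod>l\<in>{m+1..0}. f l))"

definition hprod_recip :: "(int \<Rightarrow> 'a::comm_ring_1) \<Rightarrow> int \<Rightarrow> 'a" where
  "hprod_recip f m = (if 0 \<le> m then rinv (\<Prod>l\<in>{1..m}. f l) else (\<Prod>l\<in>{m+1..0}. f l))"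

definition kext :: "(nat \<Rightarrow> nat) \<Rightarrow> nat \<Rightarrow> nat \<Rightarrow> nat \<Rightarrow> nat" where
  "kext k s n i = (if i = 0 then 0 else if i = Suc s then n else k i)"

definition Pext :: "(nat \<Rightarrow> nat \<Rightarrow> 'a) \<Rightarrow> (nat \<Rightarrow> 'a) \<Rightarrow> nat \<Rightarrow> nat \<Rightarrow> nat \<Rightarrow> 'a" where
  "Pext P Lam s i b = (if i = Suc s then Lam b else P i b)"

text \<open>Formal power series in the variables q^i_a (1 \<le> i \<le> s, 1 \<le> a \<le> k_i):
  a series is the function  d \<mapsto> coefficient of  prod q^{d^i_a}.\<close>
type_synonym 'a qser = "(nat \<Rightarrow> nat \<Rightarrow> nat) \<Rightarrow> 'a"

definition valid_exp :: "nat \<Rightarrow> (nat \<Rightarrow> nat) \<Rightarrow> (nat \<Rightarrow> nat \<Rightarrow> nat) \<Rightarrow> bool" where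
  "valid_exp s k d = (\<forall>i a. d i a \<noteq> 0 \<longrightarrow> 1 \<le> i \<and> i \<le> s \<and> 1 \<le> a \<and> a \<le> k i)"

definition Ihat :: "nat \<Rightarrow> (nat \<Rightarrow> nat) \<Rightarrow> nat \<Rightarrow> (nat \<Rightarrow> int) \<Rightarrow> (nat \<Rightarrow> nat \<Rightarrow> 'a::comm_ring_1)
    \<Rightarrow> (nat \<Rightarrow> 'a) \<Rightarrow> 'a \<Rightarrow> 'a \<Rightarrow> 'a qser" where
  "Ihat s k n ell P Lam tau lam d =
    (if valid_exp s k d then
      (1 - tau)
      * (\<Prod>i\<in>{1..s}. \<Prod>a\<in>{1..k i}.
           zpow (P i a) (ell i * int (d i a)) * zpow tau (ell i * int (d i a choose 2)))
      * (\<Prod>i\<in>{1..s}. \<Prod>a\<in>{1..k i}. \<Prod>b\<in>{1..k i} - {a}.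
           hprod (\<lambda>l. 1 - lam * P i a * rinv (P i b) * zpow tau l) (int (d i a) - int (d i b)))
      * (\<Prod>i\<in>{1..<s}. \<Prod>a\<in>{1..k i}. \<Prod>b\<in>{1..k (Suc i)}.
           hprod_recip (\<lambda>l. 1 - P i a * rinv (P (Suc i) b) * zpow tau l)
             (int (d i a) - int (d (Suc i) b)))
      * (\<Prod>a\<in>{1..k s}. \<Prod>b\<in>{1..n}.
           rinv (\<Prod>l\<in>{1..d s a}. 1 - P s a * rinv (Lam b) * tau ^ l))
     else 0)"

definition smul :: "'a::comm_ring_1 \<Rightarrow> 'a qser \<Rightarrow> 'a qser" where
  "smul x f = (\<lambda>d. x * f d)"

definition ssub :: "'a::comm_ring_1 qser \<Rightarrow> 'a qser \<Rightarrow> 'a qser" where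
  "ssub f g = (\<lambda>d. f d - g d)"

text \<open>tau^{q^i_c d/dq^i_c} and its inverse\<close>
definition tshift :: "'a::comm_ring_1 \<Rightarrow> nat \<Rightarrow> nat \<Rightarrow> 'a qser \<Rightarrow> 'a qser" where
  "tshift tau i c f = (\<lambda>d. tau ^ d i c * f d)"

definition tshift_inv :: "'a::comm_ring_1 \<Rightarrow> nat \<Rightarrow> nat \<Rightarrow> 'a qser \<Rightarrow> 'a qser" where
  "tshift_inv tau i c f = (\<lambda>d. rinv tau ^ d i c * f d)"

definition mulq :: "nat \<Rightarrow> nat \<Rightarrow> 'a::comm_ring_1 qser \<Rightarrow> 'a qser" where
  "mulq i j f = (\<lambda>d. if 1 \<le> d i j then f (d(i := (d i)(j := d i j - 1))) else 0)"

text \<open>D^i_c acting on bold-hat-I = prod (P^i_a)^{log q^i_a / log tau} * hat-I, transported to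
  the factor hat-I via the commutation rule of the prefactor:
  tau^{q d/dq}(prefactor * f) = prefactor * P^i_c * tau^{q d/dq} f.\<close>
definition Dop :: "nat \<Rightarrow> (nat \<Rightarrow> nat \<Rightarrow> 'a::comm_ring_1) \<Rightarrow> (nat \<Rightarrow> 'a) \<Rightarrow> 'a
    \<Rightarrow> nat \<Rightarrow> nat \<Rightarrow> 'a qser \<Rightarrow> 'a qser" where
  "Dop s P Lam tau i c f =
     (if i = Suc s then smul (Lam c) f else smul (P i c) (tshift tau i c f))"

definition Dop_inv :: "nat \<Rightarrow> (nat \<Rightarrow> nat \<Rightarrow> 'a::comm_ring_1) \<Rightarrow> (nat \<Rightarrow> 'a) \<Rightarrow> 'a
    \<Rightarrow> nat \<Rightarrow> nat \<Rightarrow> 'a qser \<Rightarrow> 'a qser" where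
  "Dop_inv s P Lam tau i c f =
     (if i = Suc s then smul (rinv (Lam c)) f else smul (rinv (P i c)) (tshift_inv tau i c f))"

definition Dop_pow :: "nat \<Rightarrow> (nat \<Rightarrow> nat \<Rightarrow> 'a::comm_ring_1) \<Rightarrow> (nat \<Rightarrow> 'a) \<Rightarrow> 'a
    \<Rightarrow> nat \<Rightarrow> nat \<Rightarrow> int \<Rightarrow> 'a qser \<Rightarrow> 'a qser" where
  "Dop_pow s P Lam tau i c m =
     (if 0 \<le> m then Dop s P Lam tau i c ^^ nat m else Dop_inv s P Lam tau i c ^^ nat (- m))"

definition one_minus_ratio :: "nat \<Rightarrow> (nat \<Rightarrow> nat \<Rightarrow> 'a::comm_ring_1) \<Rightarrow> (nat \<Rightarrow> 'a) \<Rightarrow> 'a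
    \<Rightarrow> 'a \<Rightarrow> nat \<Rightarrow> nat \<Rightarrow> nat \<Rightarrow> nat \<Rightarrow> 'a qser \<Rightarrow> 'a qser" where
  "one_minus_ratio s P Lam tau x i a i' b f =
     ssub f (smul x (Dop s P Lam tau i a (Dop_inv s P Lam tau i' b f)))"

definition op_prod :: "nat set \<Rightarrow> (nat \<Rightarrow> 'b \<Rightarrow> 'b) \<Rightarrow> 'b \<Rightarrow> 'b" where
  "op_prod A F = foldr (\<lambda>c g. F c \<circ> g) (sorted_list_of_set A) id"

end

theory Submission
  imports Defs
begin


lemma rinv_eq: fixes x :: "'a::comm_ring_1" assumes "x * y = 1" shows "rinv x = y"
  unfolding rinv_def
proof (rule the_equality)
  show "x * y = 1" by fact
  fix z assume z: "x * z = 1"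
  have "z = z * (x * y)" using assms by simp
  also have "\<dots> = y * (x * z)" by (simp add: algebra_simps)
  finally show "z = y" using z by simp
qed

lemma rinv_unit: fixes x :: "'a::comm_ring_1" assumes "x dvd 1" shows "x * rinv x = 1"
proof -
  obtain y where "1 = x * y" using assms by (auto simp: dvd_def)
  then show ?thesis using rinv_eq[of x y] by simp
qed

lemma rinv_unit': fixes x :: "'a::comm_ring_1" assumes "x dvd 1" shows "rinv x * x = 1"
  using rinv_unit[OF assms] by (simp add: mult.commute)

lemma rinv_dvd: fixes x :: "'a::comm_ring_1" assumes "x dvd 1" shows "rinv x dvd 1"
  using rinv_unit'[OF assms] by (metis dvdI)

lemma rinv_1[simp]: "rinv (1::'a::comm_ring_1) = 1" by (rule rinv_eq) simp

lemma rinv_mult: fixes x :: "'a::comm_ring_1" assumes "x dvd 1" "y dvd 1"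
  shows "rinv (x * y) = rinv x * rinv y"
proof (rule rinv_eq)
  have "x * y * (rinv x * rinv y) = (x * rinv x) * (y * rinv y)" by (simp add: algebra_simps)
  then show "x * y * (rinv x * rinv y) = 1" using rinv_unit[OF assms(1)] rinv_unit[OF assms(2)] by simp
qed

lemma rinv_power: fixes x :: "'a::comm_ring_1" assumes "x dvd 1"
  shows "rinv (x ^ n) = rinv x ^ n"
  by (rule rinv_eq) (simp add: power_mult_distrib[symmetric] rinv_unit[OF assms])

lemma zpow_nat[simp]: "zpow x (int n) = x ^ n" by (simp add: zpow_def)
lemma zpow_neg_nat: "zpow x (- int n) = rinv x ^ n" by (cases "n = 0") (simp_all add: zpow_def)

lemma zpow_succ: fixes x :: "'a::comm_ring_1" assumes "x dvd 1"
  shows "zpow x (m + 1) = x * zpow x m"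
proof (cases "0 \<le> m")
  case True
  then have "nat (m+1) = Suc (nat m)" by simp
  then show ?thesis using True by (simp add: zpow_def)
next
  case False
  then obtain n where n: "m = - int (Suc n)" proof -
    have "m = - int (Suc (nat (- m - 1)))" using False by simp
    then show ?thesis using that by blast
  qed
  have "m + 1 = - int n" using n by simp
  then have "zpow x (m+1) = rinv x ^ n" by (simp add: zpow_neg_nat)
  moreover have "zpow x m = rinv x ^ Suc n" using n zpow_neg_nat by metis
  ultimately show ?thesis using rinv_unit[OF assms] by (simp add: mult.assoc[symmetric])
qed

lemma zpow_pred: fixes x :: "'a::comm_ring_1" assumes "x dvd 1"
  shows "zpow x (m - 1) = rinv x * zpow x m"
proof -
  have "zpow x m = x * zpow x (m - 1)" using zpow_succ[OF assms, of "m-1"] by simp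
  then have "rinv x * zpow x m = (rinv x * x) * zpow x (m - 1)" by (simp add: algebra_simps)
  then show ?thesis using rinv_unit'[OF assms] by simp
qed

lemma zpow_add: fixes x :: "'a::comm_ring_1" assumes "x dvd 1"
  shows "zpow x (a + b) = zpow x a * zpow x b"
proof (induction b rule: int_induct[where k=0])
  case base then show ?case by (simp add: zpow_def)
next
  case (step1 i)
  have "zpow x (a + (i + 1)) = x * zpow x (a + i)" using zpow_succ[OF assms, of "a+i"] by (simp add: algebra_simps)
  then show ?case using step1 zpow_succ[OF assms, of i] by (simp add: algebra_simps)
next
  case (step2 i)
  have "zpow x (a + (i - 1)) = rinv x * zpow x (a + i)" using zpow_pred[OF assms, of "a+i"] by (simp add: algebra_simps)
  then show ?case using step2 zpow_pred[OF assms, of i] by (simp add: algebra_simps)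
qed

lemma zpow_mult_base: fixes x :: "'a::comm_ring_1" assumes "x dvd 1" "y dvd 1"
  shows "zpow (x * y) m = zpow x m * zpow y m"
  using rinv_mult[OF assms] by (simp add: zpow_def power_mult_distrib)

lemma zpow_unit: fixes x :: "'a::comm_ring_1" assumes "x dvd 1" shows "zpow x m dvd 1"
  using dvd_power_same[OF rinv_dvd[OF assms]] dvd_power_same[OF assms] by (simp add: zpow_def)

lemma prod_unit: fixes f :: "'b \<Rightarrow> 'a::comm_ring_1" shows "(\<And>x. x \<in> A \<Longrightarrow> f x dvd 1) \<Longrightarrow> prod f A dvd 1"
  by (induction A rule: infinite_finite_induct) (auto, metis mult_dvd_mono mult_1)

lemma hprod_step: fixes f :: "int \<Rightarrow> 'a::comm_ring_1" assumes u: "\<And>l. f l dvd 1"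
  shows "hprod f m = hprod f (m - 1) * f m"
proof (cases "1 \<le> m")
  case True
  have "{1..m} = insert m {1..m-1}" using True by auto
  then show ?thesis using True by (simp add: hprod_def mult.commute)
next
  case False
  show ?thesis
  proof (cases "m = 0")
    case True
    then show ?thesis using rinv_unit'[OF u[of 0]] by (simp add: hprod_def)
  next
    case False
    then have m: "m < 0" using \<open>\<not> 1 \<le> m\<close> by simp
    have "{m..0} = insert m {m+1..0}" using m by auto
    then have "(\<Prod>l\<in>{m..0}. f l) = f m * (\<Prod>l\<in>{m+1..0}. f l)" by simp
    moreover have pu: "(\<Prod>l\<in>{m+1..0}. f l) dvd 1" using u by (simp add: prod_unit) 
    ultimately have "rinv (\<Prod>l\<in>{m..0}. f l) = rinv (f m) * rinv (\<Prod>l\<in>{m+1..0}. f l)"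
      using rinv_mult[OF u pu] by simp
    moreover have "rinv (f m) * rinv (\<Prod>l\<in>{m+1..0}. f l) * f m = rinv (\<Prod>l\<in>{m+1..0}. f l)"
      using rinv_unit'[OF u[of m]] by (metis mult.commute mult.left_commute mult_1)
    ultimately show ?thesis using m by (simp add: hprod_def)
  qed
qed

lemma hprod_recip_step: fixes f :: "int \<Rightarrow> 'a::comm_ring_1" assumes u: "\<And>l. 1 \<le> l \<Longrightarrow> f l dvd 1"
  shows "hprod_recip f (m - 1) = hprod_recip f m * f m"
proof (cases "1 \<le> m")
  case True
  have "{1..m} = insert m {1..m-1}" using True by auto
  then have e: "(\<Prod>l\<in>{1..m}. f l) = f m * (\<Prod>l\<in>{1..m-1}. f l)" by simp
  have pu: "(\<Prod>l\<in>{1..m-1}. f l) dvd 1" by (intro prod_unit u) auto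
  have "rinv (\<Prod>l\<in>{1..m}. f l) = rinv (f m) * rinv (\<Prod>l\<in>{1..m-1}. f l)"
    using e rinv_mult[OF u[OF True] pu] by simp
  moreover have "rinv (f m) * rinv (\<Prod>l\<in>{1..m-1}. f l) * f m = rinv (\<Prod>l\<in>{1..m-1}. f l)"
    using rinv_unit'[OF u[OF True]] by (metis mult.commute mult.left_commute mult_1)
  ultimately show ?thesis using True by (simp add: hprod_recip_def)
next
  case False
  show ?thesis
  proof (cases "m = 0")
    case True
    then show ?thesis by (simp add: hprod_recip_def)
  next
    case False
    then have m: "m < 0" using \<open>\<not> 1 \<le> m\<close> by simp
    have "{m..0} = insert m {m+1..0}" using m by auto
    then have "(\<Prod>l\<in>{m..0}. f l) = f m * (\<Prod>l\<in>{m+1..0}. f l)" by simp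
    then show ?thesis using m by (simp add: hprod_recip_def mult.commute)
  qed
qed

lemma rinv_prod_step: fixes h :: "nat \<Rightarrow> 'a::comm_ring_1" assumes u: "\<And>l. 1 \<le> l \<Longrightarrow> h l dvd 1"
  shows "rinv (\<Prod>l\<in>{1..y}. h l) = rinv (\<Prod>l\<in>{1..Suc y}. h l) * h (Suc y)"
proof -
  have e: "(\<Prod>l\<in>{1..Suc y}. h l) = h (Suc y) * (\<Prod>l\<in>{1..y}. h l)" by (simp add: prod.cl_ivl_Suc mult.commute)
  have pu: "(\<Prod>l\<in>{1..y}. h l) dvd 1" by (intro prod_unit u) auto
  have "rinv (\<Prod>l\<in>{1..Suc y}. h l) = rinv (h (Suc y) * (\<Prod>l\<in>{1..y}. h l))"
    by (simp only: e)
  also have "\<dots> = rinv (h (Suc y)) * rinv (\<Prod>l\<in>{1..y}. h l)"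
    by (rule rinv_mult[OF u pu]) simp
  finally have "rinv (\<Prod>l\<in>{1..Suc y}. h l) = rinv (h (Suc y)) * rinv (\<Prod>l\<in>{1..y}. h l)" .
  moreover have "rinv (h (Suc y)) * rinv (\<Prod>l\<in>{1..y}. h l) * h (Suc y) = rinv (\<Prod>l\<in>{1..y}. h l)"
    using rinv_unit'[OF u[of "Suc y"]] by (metis mult.commute mult.left_commute mult_1 le_add1 plus_1_eq_Suc)
  ultimately show ?thesis by simp
qed

lemma op_prod_list: "(\<And>c. c \<in> set xs \<Longrightarrow> F c = (\<lambda>f d. g c d * f d)) \<Longrightarrow>
   foldr (\<lambda>c g. F c \<circ> g) xs id f = (\<lambda>d. prod_list (map (\<lambda>c. g c d) xs) * f d)"
  by (induction xs) (auto simp: mult.assoc)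

lemma op_prod_mult: fixes g :: "nat \<Rightarrow> 'b \<Rightarrow> 'a::comm_ring_1"
  assumes "finite A" shows
   "op_prod A (\<lambda>c f d. g c d * f d) f = (\<lambda>d. (\<Prod>c\<in>A. g c d) * f d)"
proof -
  have "\<And>d. (\<Prod>c\<in>A. g c d) = prod_list (map (\<lambda>c. g c d) (sorted_list_of_set A))"
    using prod.distinct_set_conv_list[of "sorted_list_of_set A"] assms by simp
  then show ?thesis
    using op_prod_list[of "sorted_list_of_set A" "\<lambda>c f d. g c d * f d" g f] by (simp add: op_prod_def)
qed

definition DA :: "nat \<Rightarrow> (nat \<Rightarrow> nat \<Rightarrow> 'a::comm_ring_1) \<Rightarrow> (nat \<Rightarrow> 'a) \<Rightarrow> 'a \<Rightarrow> nat \<Rightarrow> nat \<Rightarrow> (nat \<Rightarrow> nat \<Rightarrow> nat) \<Rightarrow> 'a" where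
  "DA s P Lam tau i a d = (if i = Suc s then Lam a else P i a * tau ^ d i a)"
definition DB :: "nat \<Rightarrow> (nat \<Rightarrow> nat \<Rightarrow> 'a::comm_ring_1) \<Rightarrow> (nat \<Rightarrow> 'a) \<Rightarrow> 'a \<Rightarrow> nat \<Rightarrow> nat \<Rightarrow> (nat \<Rightarrow> nat \<Rightarrow> nat) \<Rightarrow> 'a" where
  "DB s P Lam tau i a d = (if i = Suc s then rinv (Lam a) else rinv (P i a) * rinv tau ^ d i a)"

lemma omr_eq: "one_minus_ratio s P Lam tau x i a i' b =
   (\<lambda>f d. (1 - x * DA s P Lam tau i a d * DB s P Lam tau i' b d) * f d)"
  by (auto simp: fun_eq_iff one_minus_ratio_def DA_def DB_def ssub_def smul_def Dop_def Dop_inv_def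
      tshift_def tshift_inv_def algebra_simps)

lemma Dop_funpow: "i \<noteq> Suc s \<Longrightarrow> (Dop s P Lam tau i c ^^ n) f = (\<lambda>d. (P i c * tau ^ d i c) ^ n * f d)"
  by (induction n) (auto simp: Dop_def smul_def tshift_def fun_eq_iff algebra_simps)

lemma Dop_inv_funpow: "i \<noteq> Suc s \<Longrightarrow> (Dop_inv s P Lam tau i c ^^ n) f = (\<lambda>d. (rinv (P i c) * rinv tau ^ d i c) ^ n * f d)"
  by (induction n) (auto simp: Dop_inv_def smul_def tshift_inv_def fun_eq_iff algebra_simps)

lemma Dop_pow_eq: "i \<noteq> Suc s \<Longrightarrow> Dop_pow s P Lam tau i c m f =
   (\<lambda>d. (if 0 \<le> m then (P i c * tau ^ d i c) ^ nat m else (rinv (P i c) * rinv tau ^ d i c) ^ nat (- m)) * f d)"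
  by (auto simp: Dop_pow_def Dop_funpow Dop_inv_funpow)

lemma prod_ratio: "finite A \<Longrightarrow> (\<And>x. x \<in> A \<Longrightarrow> f x * u x = g x * (v x::'a::comm_ring_1)) \<Longrightarrow>
   prod f A * prod u A = prod g A * prod v A"
  by (simp add: prod.distrib[symmetric])

lemma zpow_diff: fixes x :: "'a::comm_ring_1" assumes "x dvd 1"
  shows "zpow x (int a - int b) = x ^ a * rinv x ^ b"
  using zpow_add[OF assms, of "int a" "- int b"] by (simp add: zpow_neg_nat)

lemma zpow_power_base: fixes x :: "'a::comm_ring_1" assumes "x dvd 1"
  shows "zpow (x ^ n) m = zpow x (int n * m)"
proof (induction n)
  case 0 then show ?case by (simp add: zpow_def)
next
  case (Suc n)
  have "zpow (x ^ Suc n) m = zpow x m * zpow (x ^ n) m"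
    using zpow_mult_base[OF assms dvd_power_same[OF assms, of n, simplified]] by simp
  also have "\<dots> = zpow x (m + int n * m)" using Suc zpow_add[OF assms] by simp
  finally show ?case by (simp add: algebra_simps)
qed

lemma prod_change1: "finite A \<Longrightarrow> x \<in> A \<Longrightarrow> (\<And>y. y \<in> A \<Longrightarrow> y \<noteq> x \<Longrightarrow> f y = g y) \<Longrightarrow>
   f x = c * g x \<Longrightarrow> prod f A = c * (prod g A :: 'a::comm_monoid_mult)"
proof -
  assume a: "finite A" "x \<in> A" "\<And>y. y \<in> A \<Longrightarrow> y \<noteq> x \<Longrightarrow> f y = g y" "f x = c * g x"
  have "prod f (A - {x}) = prod g (A - {x})" using a(3) by (intro prod.cong) auto
  then show ?thesis using a by (simp add: prod.remove mult.assoc)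
qed

lemma prod_if_j: "finite A \<Longrightarrow> j \<in> A \<Longrightarrow> (\<Prod>a\<in>A. if a = j then 1 else f a) = prod f (A - {j})"
proof -
  assume a: "finite A" "j \<in> A"
  have "(\<Prod>a\<in>A - {j}. if a = j then 1 else f a) = prod f (A - {j})" by (intro prod.cong) auto
  then show ?thesis using a by (simp add: prod.remove)
qed

lemma choose2_Suc: "int (Suc y choose 2) = int (y choose 2) + int y"
  by (simp add: numeral_2_eq_2)



theorem mainTheorem6:
  fixes s n :: nat and k :: "nat \<Rightarrow> nat" and ell :: "nat \<Rightarrow> int"
    and P :: "nat \<Rightarrow> nat \<Rightarrow> 'a::comm_ring_1" and Lam :: "nat \<Rightarrow> 'a"
    and tau lam :: 'a and i j :: nat
  assumes k_pos: "0 < k 1"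
    and k_mono: "\<forall>i'. 1 \<le> i' \<and> i' < s \<longrightarrow> k i' < k (Suc i')"
    and k_lt_n: "k s < n"
    and tau_unit: "tau dvd 1"
    and P_unit: "\<forall>i' a. 1 \<le> i' \<and> i' \<le> s \<and> 1 \<le> a \<and> a \<le> k i' \<longrightarrow> P i' a dvd 1"
    and Lam_unit: "\<forall>b. 1 \<le> b \<and> b \<le> n \<longrightarrow> Lam b dvd 1"
    and lam_unit: "\<forall>i' a b (l::int). 1 \<le> i' \<and> i' \<le> s \<and> a \<in> {1..k i'} \<and> b \<in> {1..k i'} \<and> a \<noteq> b
        \<longrightarrow> (1 - lam * P i' a * rinv (P i' b) * zpow tau l) dvd 1"
    and P_den_unit: "\<forall>i' a b (l::nat). 1 \<le> i' \<and> i' < s \<and> a \<in> {1..k i'} \<and> b \<in> {1..k (Suc i')} \<and> 1 \<le> l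
        \<longrightarrow> (1 - P i' a * rinv (P (Suc i') b) * tau ^ l) dvd 1"
    and Lam_den_unit: "\<forall>a b (l::nat). a \<in> {1..k s} \<and> b \<in> {1..n} \<and> 1 \<le> l
        \<longrightarrow> (1 - P s a * rinv (Lam b) * tau ^ l) dvd 1"
    and rel: "\<forall>i' a. 1 \<le> i' \<and> i' \<le> s \<and> a \<in> {1..k i'} \<longrightarrow>
        (\<Prod>b\<in>{1..kext k s n (Suc i')}. 1 - P i' a * rinv (Pext P Lam s (Suc i') b)) = 0"
    and i_range: "1 \<le> i" "i \<le> s"
    and j_range: "1 \<le> j" "j \<le> k i"
  shows
   "op_prod ({1..k i} - {j}) (\<lambda>c. one_minus_ratio s P Lam tau (tau * lam) i c i j)
      (op_prod {1..kext k s n (Suc i)} (\<lambda>c. one_minus_ratio s P Lam tau 1 i j (Suc i) c)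
        (Ihat s k n ell P Lam tau lam))
    = mulq i j (Dop_pow s P Lam tau i j (ell i)
        (op_prod {1..kext k s n (i - 1)} (\<lambda>c. one_minus_ratio s P Lam tau 1 (i - 1) c i j)
          (op_prod ({1..k i} - {j}) (\<lambda>c. one_minus_ratio s P Lam tau (tau * lam) i j i c)
            (Ihat s k n ell P Lam tau lam))))"
proof -
  have iS: "i \<noteq> Suc s" using i_range by simp
  have tu: "tau dvd 1" by (rule tau_unit)
  define I where "I = Ihat s k n ell P Lam tau lam"
  define LA where "LA d = (\<Prod>c\<in>{1..k i}-{j}. 1 - tau * lam * DA s P Lam tau i c d * DB s P Lam tau i j d)" for d
  define LB where "LB d = (\<Prod>c\<in>{1..kext k s n (Suc i)}. 1 - 1 * DA s P Lam tau i j d * DB s P Lam tau (Suc i) c d)" for d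
  define RB where "RB d = (\<Prod>c\<in>{1..kext k s n (i - 1)}. 1 - 1 * DA s P Lam tau (i - 1) c d * DB s P Lam tau i j d)" for d
  define RA where "RA d = (\<Prod>c\<in>{1..k i}-{j}. 1 - tau * lam * DA s P Lam tau i j d * DB s P Lam tau i c d)" for d
  define DP where "DP d = (if 0 \<le> ell i then (P i j * tau ^ d i j) ^ nat (ell i) else (rinv (P i j) * rinv tau ^ d i j) ^ nat (- ell i))" for d :: "nat \<Rightarrow> nat \<Rightarrow> nat"
  define f2 where "f2 i' a b l = 1 - lam * P i' a * rinv (P i' b) * zpow tau l" for i' a b l
  define g3 where "g3 i' a b l = 1 - P i' a * rinv (P (Suc i') b) * zpow tau l" for i' a b l
  define h4 where "h4 a b l = 1 - P s a * rinv (Lam b) * tau ^ l" for a b l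
  define Z where "Z i' a d = zpow (P i' a) (ell i' * int (d i' a)) * zpow tau (ell i' * int (d i' a choose 2))" for i' a and d :: "nat \<Rightarrow> nat \<Rightarrow> nat"
  define V2 where "V2 i' a d = (\<Prod>b\<in>{1..k i'} - {a}. hprod (f2 i' a b) (int (d i' a) - int (d i' b)))" for i' a and d :: "nat \<Rightarrow> nat \<Rightarrow> nat"
  define V3 where "V3 i' a d = (\<Prod>b\<in>{1..k (Suc i')}. hprod_recip (g3 i' a b) (int (d i' a) - int (d (Suc i') b)))" for i' a and d :: "nat \<Rightarrow> nat \<Rightarrow> nat"
  define V4 where "V4 a d = (\<Prod>b\<in>{1..n}. rinv (\<Prod>l\<in>{1..d s a}. h4 a b l))" for a and d :: "nat \<Rightarrow> nat \<Rightarrow> nat"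
  define T1 where "T1 d = (\<Prod>i'\<in>{1..s}. \<Prod>a\<in>{1..k i'}. Z i' a d)" for d
  define T2 where "T2 d = (\<Prod>i'\<in>{1..s}. \<Prod>a\<in>{1..k i'}. V2 i' a d)" for d
  define T3 where "T3 d = (\<Prod>i'\<in>{1..<s}. \<Prod>a\<in>{1..k i'}. V3 i' a d)" for d
  define T4 where "T4 d = (\<Prod>a\<in>{1..k s}. V4 a d)" for d
  have Ieq: "I d = (if valid_exp s k d then (1 - tau) * T1 d * T2 d * T3 d * T4 d else 0)" for d
    unfolding I_def Ihat_def T1_def T2_def T3_def T4_def Z_def V2_def V3_def V4_def f2_def g3_def h4_def
    by simp
  have zero: "LB d * I d = 0" if d0: "d i j = 0" for d
  proof (cases "valid_exp s k d")
    case False then show ?thesis by (simp add: Ieq)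
  next
    case True
    show ?thesis
    proof (cases "i = s")
      case True
      have "LB d = (\<Prod>b\<in>{1..kext k s n (Suc s)}. 1 - P s j * rinv (Pext P Lam s (Suc s) b))"
        using True d0 by (simp add: LB_def DA_def DB_def Pext_def)
      also have "\<dots> = 0" using rel i_range j_range True by simp
      finally show ?thesis by simp
    next
      case False
      then have is_: "i < s" using i_range by simp
      have kx: "kext k s n (Suc i) = k (Suc i)" using is_ by (simp add: kext_def)
      define LBb where "LBb b = 1 - 1 * DA s P Lam tau i j d * DB s P Lam tau (Suc i) b d" for b
      define H where "H b = hprod_recip (g3 i j b) (int (d i j) - int (d (Suc i) b))" for b
      have ex: "\<exists>X. LBb b * H b = (1 - P i j * rinv (P (Suc i) b)) * X" for b
      proof (cases "d (Suc i) b = 0")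
        case True
        then show ?thesis using d0 iS is_
          by (intro exI[of _ 1]) (simp add: LBb_def H_def hprod_recip_def DA_def DB_def)
      next
        case False
        define t where "t = d (Suc i) b"
        have "{- int t + 1..0} = insert 0 {- int t + 1..-1}" using False t_def by auto
        then have "H b = g3 i j b 0 * (\<Prod>l\<in>{- int t + 1..-1}. g3 i j b l)"
          using False d0 by (simp add: H_def hprod_recip_def t_def)
        then show ?thesis
          by (intro exI[of _ "LBb b * (\<Prod>l\<in>{- int t + 1..-1}. g3 i j b l)"]) (simp add: g3_def zpow_def ac_simps)
      qed
      then obtain X where X: "\<And>b. LBb b * H b = (1 - P i j * rinv (P (Suc i) b)) * X b" by metis
      have "LB d * V3 i j d = (\<Prod>b\<in>{1..k (Suc i)}. LBb b * H b)"
        by (simp add: LB_def LBb_def kx V3_def H_def prod.distrib)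
      also have "\<dots> = (\<Prod>b\<in>{1..k (Suc i)}. 1 - P i j * rinv (P (Suc i) b)) * (\<Prod>b\<in>{1..k (Suc i)}. X b)"
        by (simp add: X prod.distrib)
      also have "(\<Prod>b\<in>{1..k (Suc i)}. 1 - P i j * rinv (P (Suc i) b)) = 0"
      proof -
        have "(\<Prod>b\<in>{1..kext k s n (Suc i)}. 1 - P i j * rinv (Pext P Lam s (Suc i) b)) = 0"
          using rel i_range j_range by simp
        then show ?thesis using is_ kx by (simp add: Pext_def)
      qed
      finally have z: "LB d * V3 i j d = 0" by simp
      have "T3 d = V3 i j d * ((\<Prod>a\<in>{1..k i} - {j}. V3 i a d) * (\<Prod>i'\<in>{1..<s} - {i}. \<Prod>a\<in>{1..k i'}. V3 i' a d))"
      proof -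
        have "T3 d = (\<Prod>a\<in>{1..k i}. V3 i a d) * (\<Prod>i'\<in>{1..<s} - {i}. \<Prod>a\<in>{1..k i'}. V3 i' a d)"
          unfolding T3_def using i_range is_ by (subst prod.remove[of "{1..<s}" i]) auto
        moreover have "(\<Prod>a\<in>{1..k i}. V3 i a d) = V3 i j d * (\<Prod>a\<in>{1..k i} - {j}. V3 i a d)"
          using j_range by (subst prod.remove[of "{1..k i}" j]) auto
        ultimately show ?thesis by (simp add: mult.assoc)
      qed
      then have "LB d * T3 d = 0" using z by (simp add: mult.assoc[symmetric])
      moreover have "LB d * I d = (LB d * T3 d) * ((1 - tau) * T1 d * T2 d * T4 d)"
        using \<open>valid_exp s k d\<close> by (simp add: Ieq ac_simps)
      ultimately show ?thesis by simp
    qed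
  qed
  have Pu: "P i' a dvd 1" if "1 \<le> i'" "i' \<le> s" "1 \<le> a" "a \<le> k i'" for i' a
    using P_unit that by blast
  have Piju: "P i j dvd 1" using Pu i_range j_range by blast
  have pos: "LA (e(i := (e i)(j := Suc (e i j)))) * (LB (e(i := (e i)(j := Suc (e i j)))) * I (e(i := (e i)(j := Suc (e i j)))))
     = DP e * (RB e * (RA e * I e))" for e
  proof -
    define d where "d = e(i := (e i)(j := Suc (e i j)))"
    define y where "y = e i j"
    have dv1: "(d i' a \<noteq> 0 \<longrightarrow> 1 \<le> i' \<and> i' \<le> s \<and> 1 \<le> a \<and> a \<le> k i') = (e i' a \<noteq> 0 \<longrightarrow> 1 \<le> i' \<and> i' \<le> s \<and> 1 \<le> a \<and> a \<le> k i')" for i' a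
      by (cases "i' = i \<and> a = j") (use i_range j_range in \<open>auto simp: d_def\<close>)
    have dv: "valid_exp s k d = valid_exp s k e" unfolding valid_exp_def using dv1 by presburger
    have dij: "d i j = Suc y" by (simp add: d_def y_def)
    have dia: "a \<noteq> j \<Longrightarrow> d i a = e i a" for a by (simp add: d_def)
    have dio: "i' \<noteq> i \<Longrightarrow> d i' = e i'" for i' by (simp add: d_def)
    show ?thesis
    proof (cases "valid_exp s k e")
      case False
      have "I d = 0" "I e = 0" using False dv by (simp_all add: Ieq)
      then show ?thesis unfolding d_def[symmetric] by simp
    next
      case True
      have DPe: "DP e = zpow (P i j) (ell i) * zpow tau (int y * ell i)"
      proof -
        have "DP e = zpow (P i j * tau ^ y) (ell i)"
          using rinv_mult[OF Piju dvd_power_same[OF tu, of y, simplified]] rinv_power[OF tu]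
          by (simp add: DP_def zpow_def y_def)
        also have "\<dots> = zpow (P i j) (ell i) * zpow tau (int y * ell i)"
          using zpow_mult_base[OF Piju dvd_power_same[OF tu, of y, simplified]] zpow_power_base[OF tu] by simp
        finally show ?thesis .
      qed
      have C1: "T1 d = DP e * T1 e"
        unfolding T1_def
      proof (rule prod_change1[where x=i])
        show "(\<Prod>a\<in>{1..k i}. Z i a d) = DP e * (\<Prod>a\<in>{1..k i}. Z i a e)"
        proof (rule prod_change1[where x=j])
          have a1: "ell i * int (Suc y) = ell i * int y + ell i" by (simp add: algebra_simps)
          have a2: "ell i * int (Suc y choose 2) = ell i * int (y choose 2) + int y * ell i"
            using choose2_Suc[of y] by (simp add: algebra_simps)
          show "Z i j d = DP e * Z i j e"
            unfolding Z_def dij DPe a1 a2 zpow_add[OF Piju] zpow_add[OF tu]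
            by (simp add: y_def ac_simps)
        qed (use j_range in \<open>auto simp: Z_def dia\<close>)
      qed (use i_range in \<open>auto simp: Z_def dio\<close>)
      have rtu: "tau * rinv tau = 1" using rinv_unit[OF tu] .
      have rtu': "tau * (rinv tau * x) = x" for x using rtu by (simp add: mult.assoc[symmetric])
      have f2u: "f2 i a b l dvd 1" if "a \<in> {1..k i}" "b \<in> {1..k i}" "a \<noteq> b" for a b l
        unfolding f2_def using lam_unit i_range that by blast
      define LAa where "LAa a = 1 - tau * lam * DA s P Lam tau i a d * DB s P Lam tau i j d" for a
      define RAb where "RAb b = 1 - tau * lam * DA s P Lam tau i j e * DB s P Lam tau i b e" for b
      have per_a: "V2 i a d * (if a = j then 1 else LAa a) = V2 i a e * (if a = j then RA e else 1)"
        if a: "a \<in> {1..k i}" for a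
      proof (cases "a = j")
        case True
        have "hprod (f2 i j b) (int (d i j) - int (d i b)) = hprod (f2 i j b) (int (e i j) - int (e i b)) * RAb b"
          if b: "b \<in> {1..k i} - {j}" for b
        proof -
          have m: "int (d i j) - int (d i b) - 1 = int (e i j) - int (e i b)" using b dij dia[of b] y_def by simp
          have "f2 i j b (int (d i j) - int (d i b)) = RAb b"
            using b dij dia[of b] zpow_diff[OF tu, of "Suc y" "e i b"]
            by (simp add: f2_def RAb_def DA_def DB_def iS y_def algebra_simps)
          then show ?thesis using hprod_step[of "f2 i j b" "int (d i j) - int (d i b)"] f2u[of j b] b j_range m
            by simp
        qed
        then have "V2 i j d = V2 i j e * (\<Prod>b\<in>{1..k i} - {j}. RAb b)"
          unfolding V2_def by (simp add: prod.distrib)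
        then show ?thesis using True by (simp add: RA_def RAb_def)
      next
        case False
        have "V2 i a e = LAa a * V2 i a d"
          unfolding V2_def
        proof (rule prod_change1[where x=j])
          have m: "int (e i a) - int (e i j) - 1 = int (d i a) - int (d i j)" using False dij dia[of a] y_def by simp
          have "f2 i a j (int (e i a) - int (e i j)) = LAa a"
            using False dij dia[of a] zpow_diff[OF tu, of "e i a" "y"] rtu rtu'
            by (simp add: f2_def LAa_def DA_def DB_def iS y_def algebra_simps rtu')
          then show "hprod (f2 i a j) (int (e i a) - int (e i j)) = LAa a * hprod (f2 i a j) (int (d i a) - int (d i j))"
            using hprod_step[of "f2 i a j" "int (e i a) - int (e i j)"] f2u[of a j] a j_range False m
            by (simp add: mult.commute)
        qed (use False j_range in \<open>auto simp: dia\<close>)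
        then show ?thesis using False by simp
      qed
      have Wi: "(\<Prod>a\<in>{1..k i}. V2 i a d) * LA d = (\<Prod>a\<in>{1..k i}. V2 i a e) * RA e"
      proof -
        have "(\<Prod>a\<in>{1..k i}. V2 i a d) * (\<Prod>a\<in>{1..k i}. if a = j then 1 else LAa a)
            = (\<Prod>a\<in>{1..k i}. V2 i a e) * (\<Prod>a\<in>{1..k i}. if a = j then RA e else 1)"
          by (rule prod_ratio) (use per_a in auto)
        moreover have "(\<Prod>a\<in>{1..k i}. if a = j then 1 else LAa a) = LA d"
          using prod_if_j[of "{1..k i}" j LAa] j_range by (simp add: LA_def LAa_def)
        moreover have "(\<Prod>a\<in>{1..k i}. if a = j then RA e else 1) = RA e"
          using j_range by simp
        ultimately show ?thesis by simp
      qed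
      have C2: "LA d * T2 d = RA e * T2 e"
      proof -
        have oth: "(\<Prod>i'\<in>{1..s} - {i}. \<Prod>a\<in>{1..k i'}. V2 i' a d) = (\<Prod>i'\<in>{1..s} - {i}. \<Prod>a\<in>{1..k i'}. V2 i' a e)"
          by (intro prod.cong refl) (auto simp: V2_def dio)
        have Wi': "LA d * (\<Prod>a\<in>{1..k i}. V2 i a d) = RA e * (\<Prod>a\<in>{1..k i}. V2 i a e)"
          using Wi by (simp add: mult.commute)
        show ?thesis unfolding T2_def
          using prod.remove[of "{1..s}" i "\<lambda>i'. \<Prod>a\<in>{1..k i'}. V2 i' a d"]
            prod.remove[of "{1..s}" i "\<lambda>i'. \<Prod>a\<in>{1..k i'}. V2 i' a e"] i_range oth Wi'
          by (simp add: mult.assoc[symmetric])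
      qed
      have g3u: "g3 i' a b l dvd 1" if "1 \<le> i'" "i' < s" "a \<in> {1..k i'}" "b \<in> {1..k (Suc i')}" "1 \<le> l" for i' a b l
      proof -
        have "g3 i' a b l = 1 - P i' a * rinv (P (Suc i') b) * tau ^ nat l"
          unfolding g3_def using that zpow_nat[of tau "nat l"] by simp
        moreover have "1 \<le> nat l" using that by simp
        ultimately show ?thesis using P_den_unit that by simp
      qed
      have h4u: "h4 a b l dvd 1" if "a \<in> {1..k s}" "b \<in> {1..n}" "1 \<le> l" for a b l
        unfolding h4_def using Lam_den_unit that by blast
      have perR: "(\<Prod>a\<in>{1..k i'}. V3 i' a d) * (if i' = i then LB d else 1)
          = (\<Prod>a\<in>{1..k i'}. V3 i' a e) * (if i' = i - 1 then RB e else 1)"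
        if i': "i' \<in> {1..<s}" for i'
      proof -
        consider "i' = i" | "i' = i - 1" "2 \<le> i" | "i' \<noteq> i" "Suc i' \<noteq> i" using i' by force
        then show ?thesis
        proof cases
          case 1
          then have is_: "i < s" using i' by simp
          have kx: "kext k s n (Suc i) = k (Suc i)" using is_ by (simp add: kext_def)
          define LBb where "LBb b = 1 - 1 * DA s P Lam tau i j d * DB s P Lam tau (Suc i) b d" for b
          have "(\<Prod>a\<in>{1..k i}. V3 i a e) = LB d * (\<Prod>a\<in>{1..k i}. V3 i a d)"
          proof (rule prod_change1[where x=j])
            have "hprod_recip (g3 i j b) (int (e i j) - int (e (Suc i) b)) = hprod_recip (g3 i j b) (int (d i j) - int (d (Suc i) b)) * LBb b"
              if b: "b \<in> {1..k (Suc i)}" for b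
            proof -
              have m: "int (d i j) - int (d (Suc i) b) - 1 = int (e i j) - int (e (Suc i) b)" using dij dio[of "Suc i"] y_def by simp
              have "g3 i j b (int (d i j) - int (d (Suc i) b)) = LBb b"
                using dij dio[of "Suc i"] zpow_diff[OF tu, of "Suc y" "e (Suc i) b"] is_
                by (simp add: g3_def LBb_def DA_def DB_def iS y_def algebra_simps)
              then show ?thesis using hprod_recip_step[of "g3 i j b" "int (d i j) - int (d (Suc i) b)"] g3u[of i j b] b j_range i_range is_ m
                by simp
            qed
            then have "V3 i j e = V3 i j d * (\<Prod>b\<in>{1..k (Suc i)}. LBb b)"
              unfolding V3_def by (simp add: prod.distrib)
            then show "V3 i j e = LB d * V3 i j d" by (simp add: LB_def LBb_def kx mult.commute)
          qed (use j_range in \<open>auto simp: V3_def dia dio\<close>)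
          moreover have "i \<noteq> i - 1" using i_range by simp
          ultimately show ?thesis using 1 by (simp add: mult.commute)
        next
          case 2
          have i1: "Suc (i - 1) = i" using 2 by simp
          have kx: "kext k s n (i - 1) = k (i - 1)" using 2 i_range by (auto simp: kext_def)
          have iS1: "i - 1 \<noteq> Suc s" using i_range by simp
          have DAi1: "DA s P Lam tau (i - 1) a e = P (i - 1) a * tau ^ e (i - 1) a" for a
            unfolding DA_def using iS1 by (simp only: if_False)
          have DAi1': "DA s P Lam tau (i - Suc 0) a e = P (i - Suc 0) a * tau ^ e (i - Suc 0) a" for a
            using DAi1[of a] by simp
          define RBa where "RBa a = 1 - 1 * DA s P Lam tau (i - 1) a e * DB s P Lam tau i j e" for a
          have "V3 (i - 1) a d = RBa a * V3 (i - 1) a e" if a: "a \<in> {1..k (i - 1)}" for a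
            unfolding V3_def i1
          proof (rule prod_change1[where x=j])
            have m: "int (e (i - 1) a) - int (e i j) - 1 = int (d (i - 1) a) - int (d i j)"
              using dij dio[of "i - 1"] y_def 2 by simp
            have "g3 (i - 1) a j (int (e (i - 1) a) - int (e i j)) = RBa a"
              using zpow_diff[OF tu, of "e (i - 1) a" "y"] 2 i1 iS i_range
              by (simp add: g3_def RBa_def DAi1' DB_def y_def algebra_simps)
            then show "hprod_recip (g3 (i - 1) a j) (int (d (i - 1) a) - int (d i j)) = RBa a * hprod_recip (g3 (i - 1) a j) (int (e (i - 1) a) - int (e i j))"
              using hprod_recip_step[of "g3 (i - 1) a j" "int (e (i - 1) a) - int (e i j)"] g3u[of "i - 1" a j] a j_range i_range 2 m i1
              by (simp add: mult.commute)
          qed (use j_range 2 in \<open>auto simp: dia dio\<close>)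
          then have "(\<Prod>a\<in>{1..k (i - 1)}. V3 (i - 1) a d) = (\<Prod>a\<in>{1..k (i - 1)}. RBa a) * (\<Prod>a\<in>{1..k (i - 1)}. V3 (i - 1) a e)"
            by (simp add: prod.distrib)
          moreover have "kext k s n (i - Suc 0) = k (i - Suc 0)" using kx by simp
          moreover have "i - Suc 0 \<noteq> i" using 2 by simp
          ultimately show ?thesis using 2 by (simp add: RB_def RBa_def mult.commute)
        next
          case 3
          have "V3 i' a d = V3 i' a e" for a using 3 by (simp add: V3_def dio)
          moreover have "i' \<noteq> i - 1" using 3 i' by auto
          ultimately show ?thesis using 3 by simp
        qed
      qed
      have C3a: "T3 d * (if i < s then LB d else 1) = T3 e * RB e"
      proof -
        have "T3 d * (\<Prod>i'\<in>{1..<s}. if i' = i then LB d else 1) = T3 e * (\<Prod>i'\<in>{1..<s}. if i' = i - 1 then RB e else 1)"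
          unfolding T3_def by (rule prod_ratio) (use perR in auto)
        moreover have "(\<Prod>i'\<in>{1..<s}. if i' = i then LB d else 1) = (if i < s then LB d else 1)"
          using i_range by simp
        moreover have "(\<Prod>i'\<in>{1..<s}. if i' = i - 1 then RB e else 1) = RB e"
        proof (cases "i = 1")
          case True then show ?thesis by (simp add: RB_def kext_def)
        next
          case False
          then have "i - 1 \<in> {1..<s}" using i_range by auto
          then show ?thesis by simp
        qed
        ultimately show ?thesis by simp
      qed
      have C3b: "T4 d * (if i = s then LB d else 1) = T4 e"
      proof (cases "i = s")
        case False
        then have "V4 a d = V4 a e" for a by (simp add: V4_def dio)
        then show ?thesis using False by (simp add: T4_def)
      next
        case True
        have kx: "kext k s n (Suc i) = n" using True by (simp add: kext_def)
        define LBb where "LBb b = 1 - 1 * DA s P Lam tau i j d * DB s P Lam tau (Suc i) b d" for b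
        have "T4 e = LB d * T4 d"
          unfolding T4_def
        proof (rule prod_change1[where x=j])
          have "rinv (\<Prod>l\<in>{1..e s j}. h4 j b l) = rinv (\<Prod>l\<in>{1..d s j}. h4 j b l) * LBb b"
            if b: "b \<in> {1..n}" for b
          proof -
            have "h4 j b (Suc y) = LBb b"
              using True dij by (simp add: h4_def LBb_def DA_def DB_def iS y_def algebra_simps)
            then show ?thesis using rinv_prod_step[of "h4 j b" y] h4u[of j b] b j_range True dij y_def
              by simp
          qed
          then have "V4 j e = V4 j d * (\<Prod>b\<in>{1..n}. LBb b)"
            unfolding V4_def by (simp add: prod.distrib)
          then show "V4 j e = LB d * V4 j d" by (simp add: LB_def LBb_def kx mult.commute)
        next
          fix a assume "a \<in> {1..k s}" "a \<noteq> j"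
          then have "d s a = e s a" using dia True by simp
          then show "V4 a e = V4 a d" by (simp add: V4_def)
        qed (use j_range True in auto)
        then show ?thesis using True by (simp add: mult.commute)
      qed
      have C3: "LB d * T3 d * T4 d = RB e * T3 e * T4 e"
      proof (cases "i < s")
        case True
        then show ?thesis using C3a C3b by (simp add: ac_simps)
      next
        case False
        then have "i = s" using i_range by simp
        then have "T3 d = RB e * T3 e" "LB d * T4 d = T4 e" using C3a C3b False by (simp_all add: mult.commute)
        then show ?thesis by (metis mult.assoc mult.commute)
      qed
      have "LA d * (LB d * I d) = (1 - tau) * T1 d * (LA d * T2 d) * (LB d * T3 d * T4 d)"
        using True dv by (simp add: Ieq ac_simps)
      also have "\<dots> = (1 - tau) * (DP e * T1 e) * (RA e * T2 e) * (RB e * T3 e * T4 e)"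
        by (simp only: C1 C2 C3)
      also have "\<dots> = DP e * (RB e * (RA e * I e))"
        using True by (simp add: Ieq ac_simps)
      finally show ?thesis by (simp add: d_def)
    qed
  qed
  show ?thesis
    unfolding omr_eq I_def[symmetric]
    apply (simp add: op_prod_mult Dop_pow_eq[OF iS] mulq_def)
    apply (rule ext)
    subgoal for d
    proof (cases "d i j = 0")
      case True
      then show ?thesis using zero[of d] unfolding LA_def LB_def by (simp add: mult.assoc)
    next
      case False
      define e where "e = d(i := (d i)(j := d i j - 1))"
      have de: "d = e(i := (e i)(j := Suc (e i j)))" using False by (auto simp: e_def fun_eq_iff)
      show ?thesis using pos[of e] False unfolding LA_def LB_def RA_def RB_def DP_def e_def[symmetric]
        by (simp add: de[symmetric])
    qed
    done
qed

end
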